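(* Let $(X,d)$ be a metric space, $p\in X$, and define $\mu_p(x,y)=d(x,y)+\sqrt{d(x,p)d(y,p)}$ for $x,y\in X$. Then for all $x,y,z,w\in X$, $$\mu_p(x,y)\mu_p(z,w)\leq 9\max\{\mu_p(x,z)\mu_p(y,w),\ \mu_p(x,w)\mu_p(y,z)\}.$$ *)

theory Defs
  imports Complex_Main
begin

definition mu :: "'a::metric_space \<Rightarrow> 'a \<Rightarrow> 'a \<Rightarrow> real" where
  "mu p x y = dist x y + sqrt (dist x p * dist y p)"

end

theory Submission
  imports Defs
begin

lemma mu_sym: "mu p x y = mu p y x"
  unfolding mu_def by (simp add: dist_commute mult.commute)

lemma mu_nonneg: "0 \<le> mu p x y"
  unfolding mu_def by simp

lemma sqrt_half:
  fixes a b c v :: real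
  assumes "0 \<le> a" "0 \<le> c" "a \<le> b" "b \<le> c + v" "0 \<le> v"
  shows "sqrt (a * b) \<le> v + sqrt (c * b)"
proof (cases "b \<le> c")
  case True
  have "a * b \<le> c * b" using assms True by (intro mult_right_mono) auto
  hence "sqrt (a*b) \<le> sqrt (c*b)" by simp
  moreover have "v \<ge> 0" using assms True by linarith
  ultimately show ?thesis by linarith
next
  case False
  have "sqrt (a*b) \<le> sqrt (b*b)" using assms by (intro real_sqrt_le_mono mult_right_mono) auto
  also have "\<dots> = b" using assms by simp
  also have "b \<le> c + v" by fact
  also have "c = sqrt (c*c)" using assms by simp
  also have "sqrt (c*c) \<le> sqrt (c*b)" using assms False
    by (intro real_sqrt_le_mono mult_left_mono) auto
  finally show ?thesis by simp
qed

lemma tri: "mu p x y \<le> 3 * max (mu p x z) (mu p z y)"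
proof -
  define a where "a = dist x p"
  define b where "b = dist y p"
  define c where "c = dist z p"
  define u where "u = dist x z"
  define v where "v = dist z y"
  have d: "dist x y \<le> u + v" unfolding u_def v_def by (rule dist_triangle)
  have ta: "a \<le> c + u" unfolding a_def c_def u_def
    by (metis add.commute dist_triangle)
  have tb: "b \<le> c + v" unfolding b_def c_def v_def
    by (metis add.commute dist_commute dist_triangle)
  have nn: "0 \<le> a" "0 \<le> b" "0 \<le> c" "0 \<le> u" "0 \<le> v"
    unfolding a_def b_def c_def u_def v_def by auto
  have s: "sqrt (a*b) \<le> max (u + sqrt (a*c)) (v + sqrt (c*b))"
  proof (cases "a \<le> b")
    case True
    from sqrt_half[OF nn(1) nn(3) True tb nn(5)] show ?thesis by linarith
  next
    case False
    from sqrt_half[OF nn(2) nn(3) _ ta nn(4)] False have "sqrt (b*a) \<le> u + sqrt (c*a)" by linarith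
    thus ?thesis by (simp add: mult.commute)
  qed
  have m1: "mu p x z = u + sqrt (a*c)" unfolding mu_def u_def a_def c_def by simp
  have m2: "mu p z y = v + sqrt (c*b)" unfolding mu_def v_def b_def c_def by simp
  have m0: "mu p x y = dist x y + sqrt (a*b)" unfolding mu_def a_def b_def by simp
  have "u \<le> mu p x z" "v \<le> mu p z y" using m1 m2 nn by auto
  thus ?thesis using m0 m1 m2 d s by linarith
qed

lemma key:
  assumes "mu p x z \<le> mu p y z" "mu p x z \<le> mu p x w"
  shows "mu p x y * mu p z w \<le> 9 * (mu p x w * mu p y z)"
proof -
  have "mu p x y \<le> 3 * mu p y z"
    using tri[of p x y z] assms by (simp add: mu_sym[of p z y])
  moreover have "mu p z w \<le> 3 * mu p x w"
    using tri[of p z w x] assms by (simp add: mu_sym[of p z x])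
  ultimately have "mu p x y * mu p z w \<le> (3 * mu p y z) * (3 * mu p x w)"
    by (intro mult_mono) (auto simp: mu_nonneg)
  thus ?thesis by (simp add: mult.commute)
qed

theorem lemma3p1:
  fixes p x y z w :: "'a::metric_space"
  shows "mu p x y * mu p z w \<le> 9 * max (mu p x z * mu p y w) (mu p x w * mu p y z)"
proof -
  let ?A = "mu p x z" and ?B = "mu p x w" and ?C = "mu p y z" and ?D = "mu p y w"
  have sy: "mu p y x = mu p x y" "mu p w z = mu p z w" "mu p z x = ?A" "mu p w x = ?B"
    "mu p z y = ?C" "mu p w y = ?D" by (simp_all add: mu_sym)
  consider "?A \<le> ?B \<and> ?A \<le> ?C \<and> ?A \<le> ?D" | "?B \<le> ?A \<and> ?B \<le> ?C \<and> ?B \<le> ?D"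
    | "?C \<le> ?A \<and> ?C \<le> ?B \<and> ?C \<le> ?D" | "?D \<le> ?A \<and> ?D \<le> ?B \<and> ?D \<le> ?C"
    by linarith
  then show ?thesis
  proof cases
    case 1
    then show ?thesis     using key[of p x z y w] by (simp add: ac_simps)
  next
    case 2
    then show ?thesis     using key[of p x w y z] sy by (simp add: ac_simps)
  next
    case 3
    then show ?thesis     using key[of p y z x w] sy by (simp add: ac_simps)
  next
    case 4
    then show ?thesis     using key[of p y w x z] sy by (simp add: ac_simps)
  qed
qed

end
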